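(* For every population instance and pool size bound $G$, $$\max_{T\in\mathcal T^3}u(T)\le \tfrac73\max_{T\in\tilde{\mathcal T}^3}u(T)\quad\text{and}\quad \max_{T\in\mathcal T^4}u(T)\le \tfrac{15}{4}\max_{T\in\tilde{\mathcal T}^4}u(T).$$ That is, $\mathrm{gain}(3)\le 7/3$ and $\mathrm{gain}(4)\le 15/4$.
   Context: Population $[n]=\{1,\dots,n\}$. Individual $i$ is healthy with probability $q_i\in[0,1]$, independently, and has utility $u_i\ge0$. For $S\subseteq[n]$, $q_S=\prod_{i\in S}q_i$ ($q_\emptyset=1$). A test is a set $t\subseteq[n]$ with $|t|\le G$; it is negative iff all its members are healthy. A testing regime with budget $B$ is a tuple $T=(t_1,\dots,t_B)$ of tests; $\mathcal T^B$ is the set of all of them and $\tilde{\mathcal T}^B$ the set of non-overlapping ones (tests pairwise disjoint). $P^T_i$ is the probability that $i$ is in at least one negative test of $T$; welfare is $u(T)=\sum_iu_iP^T_i$. $\mathrm{gain}(B)$ is the supremum over instances of $\max_{\mathcal T^B}u/\max_{\tilde{\mathcal T}^B}u$. *)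

theory Defs
  imports "HOL-Analysis.Analysis"
begin

text \<open>Population [n] = {1..n}. A health state is the set H of healthy individuals;
  under independence it has probability
  prod q over H times prod (1 - q) over the rest.\<close>

definition state_prob :: "nat \<Rightarrow> (nat \<Rightarrow> real) \<Rightarrow> nat set \<Rightarrow> real" where
  "state_prob n q H = (\<Prod>i\<in>H. q i) * (\<Prod>i\<in>{1..n} - H. 1 - q i)"

definition test_negative :: "nat set \<Rightarrow> nat set \<Rightarrow> bool" where
  "test_negative H t \<longleftrightarrow> t \<subseteq> H"

definition regimes :: "nat \<Rightarrow> nat \<Rightarrow> nat \<Rightarrow> nat set list set" where
  "regimes n G B = {T. length T = B \<and> (\<forall>t\<in>set T. t \<subseteq> {1..n} \<and> card t \<le> G)}"

definition non_overlapping :: "nat set list \<Rightarrow> bool" where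
  "non_overlapping T \<longleftrightarrow> (\<forall>a < length T. \<forall>b < length T. a \<noteq> b \<longrightarrow> T ! a \<inter> T ! b = {})"

definition regimes_no :: "nat \<Rightarrow> nat \<Rightarrow> nat \<Rightarrow> nat set list set" where
  "regimes_no n G B = {T \<in> regimes n G B. non_overlapping T}"

definition P_in_neg :: "nat \<Rightarrow> (nat \<Rightarrow> real) \<Rightarrow> nat set list \<Rightarrow> nat \<Rightarrow> real" where
  "P_in_neg n q T i =
     (\<Sum>H\<in>Pow {1..n}. if (\<exists>t\<in>set T. i \<in> t \<and> test_negative H t) then state_prob n q H else 0)"

definition welfare :: "nat \<Rightarrow> (nat \<Rightarrow> real) \<Rightarrow> (nat \<Rightarrow> real) \<Rightarrow> nat set list \<Rightarrow> real" where
  "welfare n q u T = (\<Sum>i\<in>{1..n}. u i * P_in_neg n q T i)"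

end

theory Submission
  imports Defs
begin

definition memb :: "nat set list \<Rightarrow> nat \<Rightarrow> nat set" where
  "memb T i = {j. j < length T \<and> i \<in> T ! j}"

definition reg :: "nat \<Rightarrow> nat set list \<Rightarrow> nat set \<Rightarrow> nat set" where
  "reg n T S = {i\<in>{1..n}. memb T i = S}"

lemma avg_exists:
  fixes d :: "'a \<Rightarrow> real"
  assumes "finite F" "B \<le> card F"
  shows "\<exists>A\<subseteq>F. card A = B \<and> real B * sum d F \<le> real (card F) * sum d A"
  using assms
proof (induction "card F" arbitrary: F rule: less_induct)
  case less
  show ?case
  proof (cases "card F = B")
    case True then show ?thesis by (intro exI[of _ F]) auto
  next
    case False
    hence Bl: "B < card F" using less.prems by auto
    hence "F \<noteq> {}" by auto
    obtain x where x: "x \<in> F" "d x = Min (d ` F)"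
    proof -
      have "Min (d ` F) \<in> d ` F" using \<open>F \<noteq> {}\<close> less.prems(1) by (intro Min_in) auto
      then obtain x where "x \<in> F" "d x = Min (d ` F)" by (metis imageE)
      thus thesis using that by blast
    qed
    have xm: "\<forall>y\<in>F. d x \<le> d y" using x less.prems(1) by auto
    define F' where "F' = F - {x}"
    have cF': "card F' = card F - 1" using x less.prems(1) by (simp add: F'_def)
    have "card F' < card F" using cF' Bl by linarith
    moreover have "finite F'" using less.prems(1) by (simp add: F'_def)
    moreover have "B \<le> card F'" using cF' Bl by linarith
    ultimately obtain A where A: "A \<subseteq> F'" "card A = B"
      "real B * sum d F' \<le> real (card F') * sum d A"
      using less.hyps by blast
    have "(\<Sum>y\<in>A. d x) \<le> sum d A"
      using A(1) xm by (intro sum_mono) (auto simp: F'_def)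
    hence h1: "real B * d x \<le> sum d A" using A(2) by simp
    have h2: "sum d F = d x + sum d F'"
      using x less.prems(1) by (simp add: F'_def sum.remove)
    have h3: "real (card F) = real (card F') + 1" using cF' Bl by linarith
    have "real B * sum d F \<le> real (card F) * sum d A"
      using h1 h2 h3 A(3) by (simp add: algebra_simps)
    thus ?thesis using A F'_def by blast
  qed
qed

lemma state_prob_nonneg:
  assumes "\<forall>i\<in>{1..n}. 0 \<le> q i \<and> q i \<le> 1" "H \<subseteq> {1..n}"
  shows "0 \<le> state_prob n q H"
  unfolding state_prob_def using assms by (intro mult_nonneg_nonneg prod_nonneg) auto

lemma P_mono:
  assumes q: "\<forall>i\<in>{1..n}. 0 \<le> q i \<and> q i \<le> 1"
    and ev: "\<And>H. H \<subseteq> {1..n} \<Longrightarrow> (\<exists>t\<in>set T. i \<in> t \<and> t \<subseteq> H) \<Longrightarrow> (\<exists>t\<in>set T'. i \<in> t \<and> t \<subseteq> H)"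
  shows "P_in_neg n q T i \<le> P_in_neg n q T' i"
  unfolding P_in_neg_def test_negative_def
proof (rule sum_mono)
  fix H assume H: "H \<in> Pow {1..n}"
  have "0 \<le> state_prob n q H" using state_prob_nonneg[OF q] H by auto
  show "(if \<exists>t\<in>set T. i \<in> t \<and> t \<subseteq> H then state_prob n q H else 0)
       \<le> (if \<exists>t\<in>set T'. i \<in> t \<and> t \<subseteq> H then state_prob n q H else 0)"
  proof (cases "\<exists>t\<in>set T. i \<in> t \<and> t \<subseteq> H")
    case True
    moreover have "\<exists>t\<in>set T'. i \<in> t \<and> t \<subseteq> H" by (rule ev) (use H True in auto)
    ultimately show ?thesis by simp
  next
    case False
    then show ?thesis using \<open>0 \<le> state_prob n q H\<close> by auto
  qed
qed

lemma P_nonneg: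
  assumes q: "\<forall>i\<in>{1..n}. 0 \<le> q i \<and> q i \<le> 1"
  shows "0 \<le> P_in_neg n q T i"
  unfolding P_in_neg_def
  by (rule sum_nonneg) (use state_prob_nonneg[OF q] in auto)

lemma P_zero:
  assumes "memb T i = {}"
  shows "P_in_neg n q T i = 0"
  unfolding P_in_neg_def test_negative_def
  by (rule sum.neutral) (use assms in \<open>auto simp: memb_def in_set_conv_nth\<close>)

lemma key:
  assumes q: "\<forall>i\<in>{1..n}. 0 \<le> q i \<and> q i \<le> 1"
    and u: "\<forall>i\<in>{1..n}. 0 \<le> u i"
    and T: "T \<in> regimes n G B"
  shows "\<exists>T'\<in>regimes_no n G B. real B * welfare n q u T \<le> real (2^B - 1) * welfare n q u T'"
proof -
  define F where "F = Pow {..<B} - {{}}"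
  define d where "d S = (\<Sum>i\<in>reg n T S. u i * P_in_neg n q T i)" for S
  have lenT: "length T = B" using T by (simp add: regimes_def)
  have finF: "finite F" by (simp add: F_def)
  have cardF: "card F = 2^B - 1" by (simp add: F_def card_Diff_singleton card_Pow)
  have "B < 2^B" by (rule less_exp)
  hence BF: "B \<le> card F" using cardF by linarith
  have "welfare n q u T = (\<Sum>S\<in>Pow {..<B}. d S)"
    unfolding welfare_def d_def reg_def
    by (rule sum.group[symmetric]) (auto simp: memb_def lenT)
  also have "\<dots> = d {} + sum d F"
    unfolding F_def by (rule sum.remove) auto
  also have "d {} = 0" unfolding d_def reg_def by (intro sum.neutral) (auto simp: P_zero)
  finally have wT: "welfare n q u T = sum d F" by simp
  obtain A where A: "A \<subseteq> F" "card A = B" "real B * sum d F \<le> real (card F) * sum d A"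
    using avg_exists[OF finF BF] by blast
  have finA: "finite A" using A(1) finF finite_subset by blast
  obtain L where L: "set L = A" "distinct L" using finite_distinct_list[OF finA] by blast
  have lenL: "length L = B" using L A(2) distinct_card by fastforce
  define T' where "T' = map (reg n T) L"
  have regsub: "\<exists>j<B. reg n T S \<subseteq> T ! j" if "S \<in> F" for S
  proof -
    have "S \<noteq> {}" "S \<subseteq> {..<B}" using that by (auto simp: F_def)
    then obtain j where "j \<in> S" "j < B" by blast
    thus ?thesis by (intro exI[of _ j]) (auto simp: reg_def memb_def)
  qed
  have Tt: "t \<subseteq> {1..n} \<and> card t \<le> G" if "t \<in> set T" for t
    using T that by (auto simp: regimes_def)
  have Tt'1: "t \<subseteq> {1..n}" if "t \<in> set T'" for t
  proof -
    have "t \<in> reg n T ` A" using that L by (simp add: T'_def)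
    then obtain S where S: "S \<in> A" "t = reg n T S" by blast
    thus ?thesis by (auto simp: reg_def)
  qed
  have Tt'2: "card t \<le> G" if "t \<in> set T'" for t
  proof -
    have "t \<in> reg n T ` A" using that L by (simp add: T'_def)
    then obtain S where S: "S \<in> A" "t = reg n T S" by blast
    then obtain j where j: "j < B" "reg n T S \<subseteq> T ! j" using regsub A(1) by blast
    have "T ! j \<in> set T" using j lenT by simp
    hence tj: "T ! j \<subseteq> {1..n}" "card (T ! j) \<le> G" using Tt by blast+
    have "card t \<le> card (T ! j)"
    proof (rule card_mono)
      show "finite (T ! j)" using tj(1) finite_subset by blast
      show "t \<subseteq> T ! j" using S j by simp
    qed
    thus ?thesis using tj by linarith
  qed
  have Tdisj: "T' ! a \<inter> T' ! b = {}" if ab: "a < length T'" "b < length T'" "a \<noteq> b" for a b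
  proof -
    have "L ! a \<noteq> L ! b" using L(2) ab by (simp add: T'_def nth_eq_iff_index_eq)
    thus ?thesis using ab by (auto simp: T'_def reg_def)
  qed
  have lenT': "length T' = B" by (simp add: T'_def lenL)
  have T'no: "T' \<in> regimes_no n G B"
  proof -
    have r: "T' \<in> regimes n G B" unfolding regimes_def
    proof (rule CollectI, intro conjI ballI)
      show "length T' = B" by (rule lenT')
    next
      fix t assume "t \<in> set T'" thus "t \<subseteq> {1..n}" by (rule Tt'1)
    next
      fix t assume "t \<in> set T'" thus "card t \<le> G" by (rule Tt'2)
    qed
    have "non_overlapping T'" unfolding non_overlapping_def
      by (intro allI impI Tdisj)
    thus ?thesis using r by (simp add: regimes_no_def)
  qed
  have "sum d A \<le> (\<Sum>S\<in>A. \<Sum>i\<in>reg n T S. u i * P_in_neg n q T' i)"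
    unfolding d_def
  proof (intro sum_mono mult_left_mono)
    fix S i assume S: "S \<in> A" and i: "i \<in> reg n T S"
    show "0 \<le> u i" using u i by (auto simp: reg_def)
    show "P_in_neg n q T i \<le> P_in_neg n q T' i"
    proof (rule P_mono[OF q])
      fix H assume "\<exists>t\<in>set T. i \<in> t \<and> t \<subseteq> H"
      then obtain j where j: "j < B" "i \<in> T ! j" "T ! j \<subseteq> H"
        by (auto simp: in_set_conv_nth lenT)
      have "j \<in> S" using i j by (auto simp: reg_def memb_def lenT)
      hence "reg n T S \<subseteq> T ! j" by (auto simp: reg_def memb_def)
      moreover have "reg n T S \<in> set T'" using S L by (auto simp: T'_def)
      ultimately show "\<exists>t\<in>set T'. i \<in> t \<and> t \<subseteq> H" using i j by blast
    qed
  qed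
  also have "\<dots> = (\<Sum>i\<in>(\<Union>S\<in>A. reg n T S). u i * P_in_neg n q T' i)"
    by (rule sum.UNION_disjoint[symmetric]) (auto simp: finA reg_def)
  also have "\<dots> \<le> welfare n q u T'"
    unfolding welfare_def
  proof (rule sum_mono2)
    show "(\<Union>S\<in>A. reg n T S) \<subseteq> {1..n}" by (auto simp: reg_def)
    fix i assume "i \<in> {1..n} - (\<Union>S\<in>A. reg n T S)"
    hence "0 \<le> u i" using u by auto
    thus "0 \<le> u i * P_in_neg n q T' i" using P_nonneg[OF q] by simp
  qed simp
  finally have dA: "sum d A \<le> welfare n q u T'" .
  have "real B * welfare n q u T \<le> real (card F) * sum d A" using wT A(3) by simp
  also have "\<dots> \<le> real (card F) * welfare n q u T'" using dA by (intro mult_left_mono) auto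
  finally have c: "real B * welfare n q u T \<le> real (card F) * welfare n q u T'" .
  show ?thesis using T'no c unfolding cardF by blast
qed

lemma gen:
  assumes q: "\<forall>i\<in>{1..n}. 0 \<le> q i \<and> q i \<le> 1"
    and u: "\<forall>i\<in>{1..n}. 0 \<le> u i"
    and B: "1 \<le> B"
  shows "Max (welfare n q u ` regimes n G B) \<le> real (2^B - 1) / real B * Max (welfare n q u ` regimes_no n G B)"
proof -
  have fin: "finite (regimes n G B)"
    by (rule finite_subset[OF _ finite_lists_length_eq[of "Pow {1..n}" B]])
       (auto simp: regimes_def)
  have finno: "finite (regimes_no n G B)"
    using fin by (rule finite_subset[rotated]) (auto simp: regimes_no_def)
  have "replicate B {} \<in> regimes n G B" by (simp add: regimes_def)
  hence ne: "regimes n G B \<noteq> {}" by auto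
  have "Max (welfare n q u ` regimes n G B) \<in> welfare n q u ` regimes n G B"
    by (rule Max_in) (use fin ne in auto)
  then obtain T where T: "T \<in> regimes n G B" "welfare n q u T = Max (welfare n q u ` regimes n G B)"
    by (metis imageE)
  obtain T' where T': "T' \<in> regimes_no n G B"
    "real B * welfare n q u T \<le> real (2^B - 1) * welfare n q u T'"
    using key[OF q u T(1)] by blast
  have "welfare n q u T' \<le> Max (welfare n q u ` regimes_no n G B)"
    using T'(1) finno by (intro Max_ge) auto
  have "welfare n q u T \<le> real (2^B - 1) / real B * welfare n q u T'"
    using T'(2) B by (simp add: field_simps)
  also have "\<dots> \<le> real (2^B - 1) / real B * Max (welfare n q u ` regimes_no n G B)"
    using \<open>welfare n q u T' \<le> _\<close> by (intro mult_left_mono) auto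
  finally show ?thesis using T(2) by simp
qed

theorem mainTheorem6:
  fixes n G :: nat and q u :: "nat \<Rightarrow> real"
  assumes "\<forall>i\<in>{1..n}. 0 \<le> q i \<and> q i \<le> 1"
    and "\<forall>i\<in>{1..n}. 0 \<le> u i"
  shows "Max (welfare n q u ` regimes n G 3) \<le> 7/3 * Max (welfare n q u ` regimes_no n G 3)
    \<and> Max (welfare n q u ` regimes n G 4) \<le> 15/4 * Max (welfare n q u ` regimes_no n G 4)"
  using gen[OF assms, of 3 G] gen[OF assms, of 4 G] by simp

end
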